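(* Let $a,b\in\mathbb{Q}_3$ with $\gamma(a)=3$, $\gamma(b)=0$ and $(b_0,b_1)=(1,0)$ or $(2,2)$. Then $x=\sum_{k\ge0}x_k3^k\in\mathbb{Z}_3^*$ is a solution of $x^3+ax=b$ if and only if the congruences $$x_0^3\equiv b_0\pmod3,\qquad x_0^3\equiv b_0+3b_1\pmod9,$$ $$x_0^2x_1+M_1(x_0)\equiv b_2\pmod3,$$ $$x_0^2x_2+P_3^2(x_0,x_1)+x_0a_0+x_0x_1^2+M_2(x_0,x_1)\equiv b_3\pmod3,$$ $$x_0^2x_{k-1}+P_k^{k-1}(x_0,\dots,x_{k-2})+2x_0x_1x_{k-2}+x_{k-3}a_0+x_{k-4}a_1+\dots+x_0a_{k-3}+M_{k-1}(x_0,\dots,x_{k-2})\equiv b_k\pmod3,\quad k\ge4,$$ are fulfilled, where the integers $M_k(x_0,\dots,x_{k-1})$ are defined by $$x_0^3=b_0+3b_1+9M_1(x_0),$$ $$x_0^2x_1=b_2-M_1(x_0)+3M_2(x_0,x_1),$$ $$x_0^2x_2+P_3^2(x_0,x_1)+x_0a_0+x_0x_1^2=b_3-M_2(x_0,x_1)+3M_3(x_0,x_1,x_2),$$ $$x_0^2x_{k-1}+P_k^{k-1}(x_0,\dots,x_{k-2})+2x_0x_1x_{k-2}+x_{k-3}a_0+\dots+x_0a_{k-3}=b_k-M_{k-1}(x_0,\dots,x_{k-2})+3M_k(x_0,\dots,x_{k-1}),\quad k\ge4.$$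
   Context: Write $a=3^{\gamma(a)}(a_0+a_13+a_23^2+\dots)$, $b=3^{\gamma(b)}(b_0+b_13+b_23^2+\dots)$ in canonical form, with digits $a_j,b_j\in\{0,1,2\}$, $a_0,b_0\ne0$, $\gamma(a),\gamma(b)\in\mathbb{Z}$. $\mathbb{Z}_3^*$ is the set of $3$-adic units; $x\in\mathbb{Z}_3^*$ is written $x=x_0+x_13+x_23^2+\dots$ with $x_j\in\{0,1,2\}$, $x_0\ne0$. For $j\le k$, $P_k^j(x_0,\dots,x_{j-1})=\sum\frac{6}{m_0!\cdots m_{j-1}!}x_0^{m_0}\cdots x_{j-1}^{m_{j-1}}$, the sum over nonnegative integers $m_0,\dots,m_{j-1}$ with $\sum_{i=0}^{j-1}m_i=3$ and $\sum_{i=1}^{j-1}im_i=k$. *)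

theory Defs
  imports Main "HOL-Number_Theory.Cong"
begin

text \<open>3-adic numbers are represented by their digit sequences d :: nat => int,
  d j in {0,1,2}; the number is sum_j d j * 3^j (times 3^gamma).\<close>

definition digits3 :: "(nat \<Rightarrow> int) \<Rightarrow> bool" where
  "digits3 d \<longleftrightarrow> (\<forall>j. d j \<in> {0, 1, 2})"

definition trunc3 :: "(nat \<Rightarrow> int) \<Rightarrow> nat \<Rightarrow> int" where
  "trunc3 d n = (\<Sum>j<n. d j * 3 ^ j)"

text \<open>x^3 + a x = b in Z_3, where x = sum x_j 3^j, a = 3^3 * sum a_j 3^j, b = sum b_j 3^j.
  Equality in Z_3 = inverse limit of Z/3^n: equality modulo 3^n for every n.\<close>
definition solves3 :: "(nat \<Rightarrow> int) \<Rightarrow> (nat \<Rightarrow> int) \<Rightarrow> (nat \<Rightarrow> int) \<Rightarrow> bool" where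
  "solves3 x a b \<longleftrightarrow>
     (\<forall>n. [trunc3 x n ^ 3 + 27 * trunc3 a n * trunc3 x n = trunc3 b n] (mod 3 ^ n))"

definition Pkj :: "nat \<Rightarrow> nat \<Rightarrow> (nat \<Rightarrow> int) \<Rightarrow> int" where
  "Pkj k j x = (\<Sum>m\<in>{m :: nat \<Rightarrow> nat. (\<forall>i. j \<le> i \<longrightarrow> m i = 0) \<and>
                         (\<Sum>i<j. m i) = 3 \<and> (\<Sum>i<j. i * m i) = k}.
       int (6 div (\<Prod>i<j. fact (m i))) * (\<Prod>i<j. x i ^ m i))"

text \<open>Left-hand side (without the carry M) of the level-k relation, k >= 2.\<close>
definition lev :: "(nat \<Rightarrow> int) \<Rightarrow> (nat \<Rightarrow> int) \<Rightarrow> nat \<Rightarrow> int" where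
  "lev x a k =
    (if k = 2 then x 0 ^ 2 * x 1
     else if k = 3 then x 0 ^ 2 * x 2 + Pkj 3 2 x + x 0 * a 0 + x 0 * x 1 ^ 2
     else x 0 ^ 2 * x (k - 1) + Pkj k (k - 1) x + 2 * x 0 * x 1 * x (k - 2)
          + (\<Sum>i\<le>k - 3. x (k - 3 - i) * a i))"

text \<open>The carries M_k, defined by
  x_0^3 = b_0 + 3 b_1 + 9 M_1 and lev k = b_k - M_{k-1} + 3 M_k (k >= 2).
  Integer division is exact whenever the preceding congruences hold; if one fails,
  the conjunction of congruences is false anyway.\<close>
fun Mcarry :: "(nat \<Rightarrow> int) \<Rightarrow> (nat \<Rightarrow> int) \<Rightarrow> (nat \<Rightarrow> int) \<Rightarrow> nat \<Rightarrow> int" where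
  "Mcarry x a b 0 = 0"
| "Mcarry x a b (Suc 0) = (x 0 ^ 3 - b 0 - 3 * b 1) div 9"
| "Mcarry x a b (Suc (Suc n)) =
     (lev x a (Suc (Suc n)) + Mcarry x a b (Suc n) - b (Suc (Suc n))) div 3"

end

theory Submission
  imports Defs "HOL-Library.Multiset" "HOL-Combinatorics.Multiset_Permutations"
begin

lemma sum_mset_A:
  fixes f :: "'a \<Rightarrow> 'b::comm_semiring_1"
  assumes "finite A" "set_mset M \<subseteq> A"
  shows "sum_mset (image_mset f M) = (\<Sum>i\<in>A. of_nat (count M i) * f i)"
  using assms(2)
proof (induction M)
  case empty then show ?case by simp
next
  case (add x M)
  have xA: "x \<in> A" using add.prems by auto
  have "(\<Sum>i\<in>A. of_nat (count (add_mset x M) i) * f i)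
      = (\<Sum>i\<in>A. of_nat (count M i) * f i + (if i = x then f x else 0))"
    by (rule sum.cong) (auto simp: algebra_simps)
  also have "\<dots> = (\<Sum>i\<in>A. of_nat (count M i) * f i) + f x"
    using xA assms(1) by (simp add: sum.distrib)
  finally show ?case using add by (simp add: add.commute)
qed

lemma size_A:
  assumes "finite A" "set_mset M \<subseteq> A"
  shows "size M = (\<Sum>i\<in>A. count M i)"
proof -
  have "size M = sum_mset (image_mset (\<lambda>_. 1::nat) M)" by (induction M) auto
  also have "\<dots> = (\<Sum>i\<in>A. count M i)" using sum_mset_A[OF assms, of "\<lambda>_. 1::nat"] by simp
  finally show ?thesis .
qed

lemma prod_mset_A:
  fixes f :: "nat \<Rightarrow> 'b::comm_monoid_mult"
  assumes "finite A" "set_mset M \<subseteq> A"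
  shows "prod_mset (image_mset f M) = (\<Prod>i\<in>A. f i ^ count M i)"
  unfolding image_prod_mset_multiplicity
  by (rule prod.mono_neutral_left) (use assms in \<open>auto simp: not_in_iff\<close>)


definition Tr :: "nat \<Rightarrow> nat \<Rightarrow> (nat \<times> nat \<times> nat) set" where
  "Tr k j = {(p,q,r). p<j \<and> q<j \<and> r<j \<and> p+q+r=k}"

definition Qs :: "(nat \<Rightarrow> int) \<Rightarrow> nat \<Rightarrow> nat \<Rightarrow> int" where
  "Qs x k j = (\<Sum>(p,q,r)\<in>Tr k j. x p * x q * x r)"

definition Ls :: "nat \<Rightarrow> nat \<Rightarrow> nat list set" where
  "Ls k j = {xs. length xs = 3 \<and> set xs \<subseteq> {..<j} \<and> sum_list xs = k}"

definition MS :: "nat \<Rightarrow> nat \<Rightarrow> nat multiset set" where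
  "MS k j = {M. size M = 3 \<and> set_mset M \<subseteq> {..<j} \<and> sum_mset M = k}"

lemma finite_Tr: "finite (Tr k j)"
  by (rule finite_subset[of _ "{..<j} \<times> {..<j} \<times> {..<j}"]) (auto simp: Tr_def)

lemma finite_Ls: "finite (Ls k j)"
  by (rule finite_subset[of _ "{xs. set xs \<subseteq> {..<j} \<and> length xs = 3}"])
     (auto simp: Ls_def intro: finite_lists_length_eq)

lemma len3: "length xs = 3 \<longleftrightarrow> (\<exists>p q r. xs = [p,q,r])"
  by (auto simp: numeral_3_eq_3 length_Suc_conv)

lemma Qs_list: "Qs x k j = (\<Sum>xs\<in>Ls k j. prod_list (map x xs))"
proof -
  let ?h = "\<lambda>(p::nat,q::nat,r::nat). [p,q,r]"
  have inj: "inj_on ?h (Tr k j)" by (auto simp: inj_on_def)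
  have im: "Ls k j = ?h ` Tr k j"
  proof
    show "Ls k j \<subseteq> ?h ` Tr k j"
    proof
      fix xs assume "xs \<in> Ls k j"
      then obtain p q r where "xs = [p,q,r]" "p<j" "q<j" "r<j" "p+q+r=k"
        by (auto simp: Ls_def len3)
      then show "xs \<in> ?h ` Tr k j" by (force simp: Tr_def)
    qed
    show "?h ` Tr k j \<subseteq> Ls k j" by (auto simp: Tr_def Ls_def)
  qed
  show ?thesis unfolding im Qs_def sum.reindex[OF inj]
    by (rule sum.cong) (auto simp: algebra_simps)
qed

lemma mset_Ls: "mset ` Ls k j = MS k j"
proof
  show "mset ` Ls k j \<subseteq> MS k j" by (auto simp: Ls_def MS_def sum_mset_sum_list)
  show "MS k j \<subseteq> mset ` Ls k j"
  proof
    fix M assume M: "M \<in> MS k j"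
    obtain xs where xs: "mset xs = M" using ex_mset by blast
    have "xs \<in> Ls k j" using M xs[symmetric] by (auto simp: Ls_def MS_def sum_mset_sum_list)
    then show "M \<in> mset ` Ls k j" using xs by blast
  qed
qed

lemma fiber_Ls: "M \<in> MS k j \<Longrightarrow> {xs. xs \<in> Ls k j \<and> mset xs = M} = permutations_of_multiset M"
  by (auto simp: Ls_def MS_def permutations_of_multiset_def sum_mset_sum_list)

lemma Qs_MS: "Qs x k j = (\<Sum>M\<in>MS k j. of_nat (card (permutations_of_multiset M)) * prod_mset (image_mset x M))"
proof -
  have "Qs x k j = (\<Sum>M\<in>mset ` Ls k j. \<Sum>xs\<in>{xs. xs \<in> Ls k j \<and> mset xs = M}. prod_list (map x xs))"
    unfolding Qs_list using sum.image_gen[OF finite_Ls] by blast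
  also have "\<dots> = (\<Sum>M\<in>MS k j. of_nat (card (permutations_of_multiset M)) * prod_mset (image_mset x M))"
    unfolding mset_Ls
  proof (rule sum.cong[OF refl])
    fix M assume M: "M \<in> MS k j"
    have "(\<Sum>xs\<in>{xs. xs \<in> Ls k j \<and> mset xs = M}. prod_list (map x xs))
        = (\<Sum>xs\<in>permutations_of_multiset M. prod_mset (image_mset x M))"
      unfolding fiber_Ls[OF M]
      by (rule sum.cong[OF refl]) (auto simp: permutations_of_multiset_def prod_mset_prod_list[symmetric])
    then show "(\<Sum>xs\<in>{xs. xs \<in> Ls k j \<and> mset xs = M}. prod_list (map x xs))
        = of_nat (card (permutations_of_multiset M)) * prod_mset (image_mset x M)" by simp
  qed
  finally show ?thesis .
qed

lemma Pkj_MS: "Pkj k j x = (\<Sum>M\<in>MS k j. int (6 div (\<Prod>i<j. fact (count M i))) * (\<Prod>i<j. x i ^ count M i))"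
proof -
  let ?F = "{m :: nat \<Rightarrow> nat. (\<forall>i. j \<le> i \<longrightarrow> m i = 0) \<and>
                         (\<Sum>i<j. m i) = 3 \<and> (\<Sum>i<j. i * m i) = k}"
  have inj: "inj_on count (MS k j)" by (auto simp: inj_on_def multiset_eq_iff)
  have sz: "size M = (\<Sum>i<j. count M i)" if "set_mset M \<subseteq> {..<j}" for M :: "nat multiset"
    using size_A[OF _ that] by simp
  have sm: "sum_mset M = (\<Sum>i<j. i * count M i)" if "set_mset M \<subseteq> {..<j}" for M :: "nat multiset"
    using sum_mset_A[OF _ that, of id] by (simp add: mult.commute)
  have im: "?F = count ` MS k j"
  proof
    show "count ` MS k j \<subseteq> ?F"
    proof
      fix m assume "m \<in> count ` MS k j"
      then obtain M where M: "M \<in> MS k j" "m = count M" by blast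
      have sub: "set_mset M \<subseteq> {..<j}" using M by (auto simp: MS_def)
      have "\<forall>i. j \<le> i \<longrightarrow> m i = 0"
      proof (intro allI impI)
        fix i assume "j \<le> i"
        then have "i \<notin># M" using sub by auto
        then show "m i = 0" using M(2) by (simp add: count_eq_zero_iff)
      qed
      moreover have "(\<Sum>i<j. m i) = 3" using sz[OF sub] M by (auto simp: MS_def)
      moreover have "(\<Sum>i<j. i * m i) = k" using sm[OF sub] M by (auto simp: MS_def)
      ultimately show "m \<in> ?F" by blast
    qed
    show "?F \<subseteq> count ` MS k j"
    proof
      fix m assume m: "m \<in> ?F"
      have lt: "i < j" if "0 < m i" for i
      proof (rule ccontr)
        assume "\<not> i < j" then have "m i = 0" using m by auto
        then show False using that by simp
      qed
      have fin: "finite {i. 0 < m i}"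
        by (rule finite_subset[of _ "{..<j}"]) (auto intro: lt)
      define M where "M = Abs_multiset m"
      have cM: "count M = m" unfolding M_def using fin by (simp add: count_Abs_multiset)
      have sub: "set_mset M \<subseteq> {..<j}"
      proof
        fix i assume "i \<in># M"
        then have "0 < count M i" by simp
        then show "i \<in> {..<j}" using lt cM by auto
      qed
      have "M \<in> MS k j" using sz[OF sub] sm[OF sub] m cM sub by (auto simp: MS_def)
      then show "m \<in> count ` MS k j" using cM by blast
    qed
  qed
  show ?thesis unfolding Pkj_def im sum.reindex[OF inj] by simp
qed

lemma Pkj_Qs: "Pkj k j x = Qs x k j"
  unfolding Pkj_MS Qs_MS
proof (rule sum.cong[OF refl])
  fix M assume M: "M \<in> MS k j"
  have sub: "set_mset M \<subseteq> {..<j}" and s3: "size M = 3" using M by (auto simp: MS_def)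
  have "(\<Prod>x\<in>set_mset M. fact (count M x)) = (\<Prod>i<j. fact (count M i) :: nat)"
    by (rule prod.mono_neutral_left) (use sub in \<open>auto simp: not_in_iff\<close>)
  then have "card (permutations_of_multiset M) = 6 div (\<Prod>i<j. fact (count M i))"
    unfolding card_permutations_of_multiset s3 by (simp add: fact_numeral)
  moreover have "prod_mset (image_mset x M) = (\<Prod>i<j. x i ^ count M i)"
    using prod_mset_A[OF _ sub] by simp
  ultimately show "int (6 div (\<Prod>i<j. fact (count M i))) * (\<Prod>i<j. x i ^ count M i)
     = of_nat (card (permutations_of_multiset M)) * prod_mset (image_mset x M)" by simp
qed


lemma Qs_step:
  assumes k: "k \<ge> 3"
  shows "Qs x k (k+1) = Qs x k (k-1) + 3 * x 0 ^ 2 * x k + 6 * x 0 * x 1 * x (k-1)"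
proof -
  define E where "E = {(k,0,0),(0,k,0),(0,0,k),(k-1,0,1),(k-1,1,0),(0,k-1,1),(1,k-1,0),(0,1,k-1),(1,0,k-1)}"
  have U: "Tr k (k+1) = Tr k (k-1) \<union> E"
  proof
    show "Tr k (k+1) \<subseteq> Tr k (k-1) \<union> E"
    proof
      fix t assume "t \<in> Tr k (k+1)"
      then obtain p q r where t: "t = (p,q,r)" and s: "p+q+r = k" by (auto simp: Tr_def)
      show "t \<in> Tr k (k-1) \<union> E"
      proof (cases "k - 1 \<le> p")
        case True
        then have "(p = k \<and> q = 0 \<and> r = 0) \<or> (p = k-1 \<and> q = 0 \<and> r = 1) \<or> (p = k-1 \<and> q = 1 \<and> r = 0)"
          using s k by arith
        then show ?thesis unfolding t E_def by auto
      next
        case p: False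
        show ?thesis
        proof (cases "k - 1 \<le> q")
          case True
          then have "(q = k \<and> p = 0 \<and> r = 0) \<or> (q = k-1 \<and> p = 0 \<and> r = 1) \<or> (q = k-1 \<and> p = 1 \<and> r = 0)"
            using s k by arith
          then show ?thesis unfolding t E_def by auto
        next
          case q: False
          show ?thesis
          proof (cases "k - 1 \<le> r")
            case True
            then have "(r = k \<and> p = 0 \<and> q = 0) \<or> (r = k-1 \<and> p = 0 \<and> q = 1) \<or> (r = k-1 \<and> p = 1 \<and> q = 0)"
              using s k by arith
            then show ?thesis unfolding t E_def by auto
          next
            case False
            then have "t \<in> Tr k (k-1)" using p q s unfolding t Tr_def by simp
            then show ?thesis by simp
          qed
        qed
      qed
    qed
    show "Tr k (k-1) \<union> E \<subseteq> Tr k (k+1)"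
    proof -
      have "Tr k (k-1) \<subseteq> Tr k (k+1)" by (auto simp: Tr_def)
      moreover have "E \<subseteq> Tr k (k+1)" using k by (simp add: E_def Tr_def)
      ultimately show ?thesis by simp
    qed
  qed
  have D: "Tr k (k-1) \<inter> E = {}" using k by (simp add: E_def Tr_def)
  have fE: "finite E" by (simp add: E_def)
  have "Qs x k (k+1) = Qs x k (k-1) + (\<Sum>(p,q,r)\<in>E. x p * x q * x r)"
    unfolding Qs_def U by (rule sum.union_disjoint[OF finite_Tr fE D])
  also have "(\<Sum>(p,q,r)\<in>E. x p * x q * x r) = 3 * x 0 ^ 2 * x k + 6 * x 0 * x 1 * x (k-1)"
    using k unfolding E_def by (simp add: power2_eq_square algebra_simps)
  finally show ?thesis by (simp add: add.assoc)
qed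

lemma Tr01: "Tr 0 1 = {(0,0,0)}" unfolding Tr_def set_eq_iff split_paired_all by simp presburger
lemma Tr12: "Tr 1 2 = {(1,0,0),(0,1,0),(0,0,1)}" unfolding Tr_def set_eq_iff split_paired_all by simp presburger
lemma Tr23: "Tr 2 3 = {(2,0,0),(0,2,0),(0,0,2),(1,1,0),(1,0,1),(0,1,1)}"
  unfolding Tr_def set_eq_iff split_paired_all by simp presburger
lemma Tr32: "Tr 3 2 = {(1,1,1)}" unfolding Tr_def set_eq_iff split_paired_all by simp presburger

lemma Qs0: "Qs x 0 1 = x 0 ^ 3" unfolding Qs_def Tr01 by (simp add: power3_eq_cube)
lemma Qs1: "Qs x 1 2 = 3 * x 0 ^ 2 * x 1" unfolding Qs_def Tr12 by (simp add: power2_eq_square)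
lemma Qs2: "Qs x 2 3 = 3 * x 0 ^ 2 * x 2 + 3 * x 0 * x 1 ^ 2"
  unfolding Qs_def Tr23 by (simp add: power2_eq_square algebra_simps)
lemma Qs32: "Qs x 3 2 = x 1 ^ 3" unfolding Qs_def Tr32 by (simp add: power3_eq_cube)


lemma group3:
  fixes c :: "'a \<Rightarrow> int"
  assumes S: "finite S"
  shows "[(\<Sum>t\<in>S. c t * 3 ^ w t) = (\<Sum>k<n. (\<Sum>t\<in>{t\<in>S. w t = k}. c t) * 3 ^ k)] (mod 3 ^ n)"
proof -
  let ?S1 = "{t\<in>S. w t < n}" and ?S2 = "{t\<in>S. \<not> w t < n}"
  have split: "(\<Sum>t\<in>S. c t * 3 ^ w t) = (\<Sum>t\<in>?S1. c t * 3 ^ w t) + (\<Sum>t\<in>?S2. c t * 3 ^ w t)"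
  proof -
    have eq: "?S1 \<union> ?S2 = S" by blast
    have "(\<Sum>t\<in>S. c t * 3 ^ w t) = (\<Sum>t\<in>?S1 \<union> ?S2. c t * 3 ^ w t)" by (simp only: eq)
    also have "\<dots> = (\<Sum>t\<in>?S1. c t * 3 ^ w t) + (\<Sum>t\<in>?S2. c t * 3 ^ w t)"
      by (rule sum.union_disjoint) (use S in auto)
    finally show ?thesis .
  qed
  have d: "(3::int) ^ n dvd (\<Sum>t\<in>?S2. c t * 3 ^ w t)"
  proof (rule dvd_sum)
    fix t assume "t \<in> ?S2"
    then have "n \<le> w t" by simp
    then have "(3::int) ^ n dvd 3 ^ w t" by (rule le_imp_power_dvd)
    then show "(3::int) ^ n dvd c t * 3 ^ w t" by simp
  qed
  have g: "(\<Sum>t\<in>?S1. c t * 3 ^ w t) = (\<Sum>k<n. \<Sum>t\<in>{t. t \<in> ?S1 \<and> w t = k}. c t * 3 ^ w t)"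
    by (rule sum.group[symmetric]) (use S in force)+
  also have "\<dots> = (\<Sum>k<n. (\<Sum>t\<in>{t\<in>S. w t = k}. c t) * 3 ^ k)"
  proof (rule sum.cong[OF refl])
    fix k assume "k \<in> {..<n}"
    then have "{t. t \<in> ?S1 \<and> w t = k} = {t\<in>S. w t = k}" by auto
    then show "(\<Sum>t\<in>{t. t \<in> ?S1 \<and> w t = k}. c t * 3 ^ w t) = (\<Sum>t\<in>{t\<in>S. w t = k}. c t) * 3 ^ k"
      by (simp add: sum_distrib_right)
  qed
  finally have "(\<Sum>t\<in>S. c t * 3 ^ w t) = (\<Sum>k<n. (\<Sum>t\<in>{t\<in>S. w t = k}. c t) * 3 ^ k) + (\<Sum>t\<in>?S2. c t * 3 ^ w t)"
    using split by simp
  then show ?thesis using d unfolding cong_iff_dvd_diff by simp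
qed

lemma cube_expand:
  "trunc3 x n ^ 3 = (\<Sum>(p,q,r)\<in>{..<n} \<times> {..<n} \<times> {..<n}. (x p * x q * x r) * 3 ^ (p+q+r))"
proof -
  let ?f = "\<lambda>p. x p * 3 ^ p"
  have 1: "trunc3 x n * trunc3 x n = (\<Sum>p<n. \<Sum>q<n. ?f p * ?f q)"
    unfolding trunc3_def by (rule sum_product)
  have 2: "(\<Sum>p<n. \<Sum>q<n. ?f p * ?f q) * trunc3 x n = (\<Sum>p<n. \<Sum>q<n. \<Sum>r<n. ?f p * ?f q * ?f r)"
    unfolding trunc3_def sum_distrib_right by (simp only: sum_distrib_left)
  have 3: "(\<Sum>p<n. \<Sum>q<n. \<Sum>r<n. ?f p * ?f q * ?f r) = (\<Sum>p<n. \<Sum>q<n. \<Sum>r<n. (x p * x q * x r) * 3 ^ (p+q+r))"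
    by (intro sum.cong refl) (simp add: power_add mult_ac)
  have "trunc3 x n ^ 3 = (\<Sum>p<n. \<Sum>q<n. \<Sum>r<n. (x p * x q * x r) * 3 ^ (p+q+r))"
    using 1 2 3 by (simp add: power3_eq_cube)
  then show ?thesis unfolding sum.cartesian_product .
qed

lemma ax_expand:
  "27 * trunc3 a n * trunc3 x n = (\<Sum>(i,j)\<in>{..<n} \<times> {..<n}. (a i * x j) * 3 ^ (i+j+3))"
proof -
  have 1: "trunc3 a n * trunc3 x n = (\<Sum>i<n. \<Sum>j<n. (a i * 3 ^ i) * (x j * 3 ^ j))"
    unfolding trunc3_def by (rule sum_product)
  have 2: "27 * (\<Sum>i<n. \<Sum>j<n. (a i * 3 ^ i) * (x j * 3 ^ j)) = (\<Sum>i<n. \<Sum>j<n. (a i * x j) * 3 ^ (i+j+3))"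
    unfolding sum_distrib_left by (intro sum.cong refl) (simp add: power_add mult_ac)
  show ?thesis using 1 2 unfolding sum.cartesian_product by (simp add: mult.assoc)
qed

definition AX :: "(nat \<Rightarrow> int) \<Rightarrow> (nat \<Rightarrow> int) \<Rightarrow> nat \<Rightarrow> int" where
  "AX x a k = (if 3 \<le> k then (\<Sum>i\<le>k - 3. x (k - 3 - i) * a i) else 0)"

lemma cube_group: "k < n \<Longrightarrow>
  (\<Sum>t\<in>{t\<in>{..<n} \<times> {..<n} \<times> {..<n}. (case t of (p,q,r) \<Rightarrow> p+q+r) = k}. case t of (p,q,r) \<Rightarrow> x p * x q * x r)
   = Qs x k (k+1)"
proof -
  assume kn: "k < n"
  have "{t\<in>{..<n} \<times> {..<n} \<times> {..<n}. (case t of (p,q,r) \<Rightarrow> p+q+r) = k} = Tr k (k+1)"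
  proof (rule set_eqI)
    fix t :: "nat \<times> nat \<times> nat"
    obtain p q r where t: "t = (p,q,r)" by (cases t)
    have "(p<n \<and> q<n \<and> r<n \<and> p+q+r = k) \<longleftrightarrow> (p<k+1 \<and> q<k+1 \<and> r<k+1 \<and> p+q+r = k)"
      using kn by arith
    then show "t \<in> {t\<in>{..<n} \<times> {..<n} \<times> {..<n}. (case t of (p,q,r) \<Rightarrow> p+q+r) = k} \<longleftrightarrow> t \<in> Tr k (k+1)"
      unfolding t Tr_def by simp
  qed
  then show ?thesis unfolding Qs_def by simp
qed

lemma ax_group: "k < n \<Longrightarrow>
  (\<Sum>t\<in>{t\<in>{..<n} \<times> {..<n}. (case t of (i,j) \<Rightarrow> i+j+3) = k}. case t of (i,j) \<Rightarrow> a i * x j)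
   = AX x a k"
proof -
  assume kn: "k < n"
  show ?thesis
  proof (cases "3 \<le> k")
    case False
    then have e: "{t\<in>{..<n} \<times> {..<n}. (case t of (i,j) \<Rightarrow> i+j+3) = k} = {}" by auto
    show ?thesis unfolding e AX_def using False by simp
  next
    case True
    let ?h = "\<lambda>i. (i, k - 3 - i)"
    have inj: "inj_on ?h {..k-3}" by (auto simp: inj_on_def)
    have im: "{t\<in>{..<n} \<times> {..<n}. (case t of (i,j) \<Rightarrow> i+j+3) = k} = ?h ` {..k-3}"
    proof
      show "{t\<in>{..<n} \<times> {..<n}. (case t of (i,j) \<Rightarrow> i+j+3) = k} \<subseteq> ?h ` {..k-3}"
      proof
        fix t assume t: "t \<in> {t\<in>{..<n} \<times> {..<n}. (case t of (i,j) \<Rightarrow> i+j+3) = k}"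
        obtain i j where ij: "t = (i,j)" by (cases t)
        have "i+j+3 = k" using t ij by simp
        then have "t = ?h i" "i \<in> {..k-3}" using ij by auto
        then show "t \<in> ?h ` {..k-3}" by blast
      qed
      show "?h ` {..k-3} \<subseteq> {t\<in>{..<n} \<times> {..<n}. (case t of (i,j) \<Rightarrow> i+j+3) = k}"
      proof
        fix t assume "t \<in> ?h ` {..k-3}"
        then obtain i where i: "i \<le> k-3" "t = ?h i" by auto
        then show "t \<in> {t\<in>{..<n} \<times> {..<n}. (case t of (i,j) \<Rightarrow> i+j+3) = k}"
          using kn True by auto
      qed
    qed
    show ?thesis unfolding im sum.reindex[OF inj] AX_def using True
      by (simp add: mult.commute)
  qed
qed

lemma S_cong:
  "[trunc3 x n ^ 3 + 27 * trunc3 a n * trunc3 x n = (\<Sum>k<n. (Qs x k (k+1) + AX x a k) * 3 ^ k)] (mod 3 ^ n)"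
proof -
  have c1: "[trunc3 x n ^ 3 = (\<Sum>k<n. Qs x k (k+1) * 3 ^ k)] (mod 3 ^ n)"
  proof -
    have "[trunc3 x n ^ 3 = (\<Sum>k<n. (\<Sum>t\<in>{t\<in>{..<n} \<times> {..<n} \<times> {..<n}. (case t of (p,q,r) \<Rightarrow> p+q+r) = k}. case t of (p,q,r) \<Rightarrow> x p * x q * x r) * 3 ^ k)] (mod 3 ^ n)"
      unfolding cube_expand
      using group3[of "{..<n} \<times> {..<n} \<times> {..<n}" "\<lambda>(p,q,r). x p * x q * x r" "\<lambda>(p,q,r). p+q+r" n]
      by (simp add: case_prod_beta')
    moreover have "(\<Sum>k<n. (\<Sum>t\<in>{t\<in>{..<n} \<times> {..<n} \<times> {..<n}. (case t of (p,q,r) \<Rightarrow> p+q+r) = k}. case t of (p,q,r) \<Rightarrow> x p * x q * x r) * 3 ^ k)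
        = (\<Sum>k<n. Qs x k (k+1) * 3 ^ k)"
      by (rule sum.cong[OF refl]) (simp add: cube_group)
    ultimately show ?thesis by simp
  qed
  have c2: "[27 * trunc3 a n * trunc3 x n = (\<Sum>k<n. AX x a k * 3 ^ k)] (mod 3 ^ n)"
  proof -
    have "[27 * trunc3 a n * trunc3 x n = (\<Sum>k<n. (\<Sum>t\<in>{t\<in>{..<n} \<times> {..<n}. (case t of (i,j) \<Rightarrow> i+j+3) = k}. case t of (i,j) \<Rightarrow> a i * x j) * 3 ^ k)] (mod 3 ^ n)"
      unfolding ax_expand
      using group3[of "{..<n} \<times> {..<n}" "\<lambda>(i,j). a i * x j" "\<lambda>(i,j). i+j+3" n]
      by (simp add: case_prod_beta')
    moreover have "(\<Sum>k<n. (\<Sum>t\<in>{t\<in>{..<n} \<times> {..<n}. (case t of (i,j) \<Rightarrow> i+j+3) = k}. case t of (i,j) \<Rightarrow> a i * x j) * 3 ^ k)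
        = (\<Sum>k<n. AX x a k * 3 ^ k)"
      by (rule sum.cong[OF refl]) (simp add: ax_group)
    ultimately show ?thesis by simp
  qed
  show ?thesis using cong_add[OF c1 c2] by (simp add: sum.distrib algebra_simps)
qed


definition Lv :: "(nat \<Rightarrow> int) \<Rightarrow> (nat \<Rightarrow> int) \<Rightarrow> nat \<Rightarrow> int" where
  "Lv x a k = (if k = 0 then x 0 ^ 3 else if k = 1 then 0 else lev x a k)"

definition Zc :: "(nat \<Rightarrow> int) \<Rightarrow> nat \<Rightarrow> int" where
  "Zc x k = (if k = 0 then 0 else if k = 1 then x 0 ^ 2 * x 1
     else if k = 2 then x 0 ^ 2 * x 2 + x 0 * x 1 ^ 2
     else x 0 ^ 2 * x k + 2 * x 0 * x 1 * x (k - 1))"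

lemma per_k: "Qs x k (k+1) + AX x a k = Lv x a k + 3 * Zc x k - (if k = 0 then 0 else Zc x (k-1))"
proof -
  consider "k = 0" | "k = 1" | "k = 2" | "k = 3" | "k \<ge> 4" by linarith
  then show ?thesis
  proof cases
    case 1 then show ?thesis using Qs0[of x] by (simp add: AX_def Lv_def Zc_def)
  next
    case 2 then show ?thesis using Qs1[of x] by (simp add: AX_def Lv_def Zc_def numeral_2_eq_2)
  next
    case 3 then show ?thesis using Qs2[of x] by (simp add: AX_def Lv_def Zc_def lev_def)
  next
    case 4
    have q: "Qs x 3 4 = x 1 ^ 3 + 3 * x 0 ^ 2 * x 3 + 6 * x 0 * x 1 * x 2"
      using Qs_step[of 3 x] Qs32[of x] by simp
    show ?thesis using 4 q by (simp add: AX_def Lv_def Zc_def lev_def Pkj_Qs Qs32 algebra_simps)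
  next
    case 5
    have q: "Qs x k (k+1) = Qs x k (k-1) + 3 * x 0 ^ 2 * x k + 6 * x 0 * x 1 * x (k-1)"
      using Qs_step[of k x] 5 by simp
    have zk: "Zc x k = x 0 ^ 2 * x k + 2 * x 0 * x 1 * x (k - 1)" using 5 by (simp add: Zc_def)
    have zk1: "Zc x (k-1) = x 0 ^ 2 * x (k-1) + 2 * x 0 * x 1 * x (k - 2)"
    proof -
      have "k - 1 \<noteq> 0" "k - 1 \<noteq> 1" "k - 1 \<noteq> 2" "k - 1 - 1 = k - 2" using 5 by auto
      then show ?thesis unfolding Zc_def by simp
    qed
    have lv: "Lv x a k = x 0 ^ 2 * x (k - 1) + Pkj k (k - 1) x + 2 * x 0 * x 1 * x (k - 2) + AX x a k"
      using 5 by (simp add: Lv_def lev_def AX_def)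
    have ne: "k \<noteq> 0" using 5 by simp
    show ?thesis unfolding q zk zk1 lv Pkj_Qs using ne by (simp add: algebra_simps)
  qed
qed

lemma tele: "(\<Sum>k<Suc n. (Qs x k (k+1) + AX x a k) * 3 ^ k) = (\<Sum>k<Suc n. Lv x a k * 3 ^ k) + Zc x n * 3 ^ Suc n"
proof (induction n)
  case 0 then show ?case using per_k[of x 0 a] by (simp add: Zc_def)
next
  case (Suc n)
  have "(\<Sum>k<Suc (Suc n). (Qs x k (k+1) + AX x a k) * 3 ^ k)
      = (\<Sum>k<Suc n. Lv x a k * 3 ^ k) + Zc x n * 3 ^ Suc n + (Qs x (Suc n) (Suc n + 1) + AX x a (Suc n)) * 3 ^ Suc n"
    using Suc by simp
  also have "\<dots> = (\<Sum>k<Suc n. Lv x a k * 3 ^ k) + Zc x n * 3 ^ Suc n + (Lv x a (Suc n) + 3 * Zc x (Suc n) - Zc x n) * 3 ^ Suc n"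
    using per_k[of x "Suc n" a] by simp
  also have "\<dots> = (\<Sum>k<Suc (Suc n). Lv x a k * 3 ^ k) + Zc x (Suc n) * 3 ^ Suc (Suc n)"
    by (simp add: algebra_simps)
  finally show ?case .
qed

lemma S_Lv: "[trunc3 x n ^ 3 + 27 * trunc3 a n * trunc3 x n = (\<Sum>k<n. Lv x a k * 3 ^ k)] (mod 3 ^ n)"
proof (cases n)
  case 0 then show ?thesis by simp
next
  case (Suc m)
  have "[(\<Sum>k<Suc m. (Qs x k (k+1) + AX x a k) * 3 ^ k) = (\<Sum>k<Suc m. Lv x a k * 3 ^ k)] (mod 3 ^ Suc m)"
    unfolding tele cong_iff_dvd_diff by simp
  then show ?thesis using S_cong[of x n a] Suc by (auto intro: cong_trans)
qed

definition Dd :: "(nat \<Rightarrow> int) \<Rightarrow> (nat \<Rightarrow> int) \<Rightarrow> (nat \<Rightarrow> int) \<Rightarrow> nat \<Rightarrow> int" where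
  "Dd x a b n = (\<Sum>k<n. (Lv x a k - b k) * 3 ^ k)"

lemma Dd_Suc: "Dd x a b (Suc n) = Dd x a b n + (Lv x a n - b n) * 3 ^ n"
  by (simp add: Dd_def)

lemma solves_Dd: "solves3 x a b \<longleftrightarrow> (\<forall>n. (3::int) ^ n dvd Dd x a b n)"
proof -
  have "[trunc3 x n ^ 3 + 27 * trunc3 a n * trunc3 x n = trunc3 b n] (mod 3 ^ n) \<longleftrightarrow> 3 ^ n dvd Dd x a b n" for n
  proof -
    have e: "Dd x a b n = (\<Sum>k<n. Lv x a k * 3 ^ k) - trunc3 b n"
      by (simp add: Dd_def trunc3_def sum_subtractf left_diff_distrib)
    have "[trunc3 x n ^ 3 + 27 * trunc3 a n * trunc3 x n = trunc3 b n] (mod 3 ^ n) \<longleftrightarrow>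
          [(\<Sum>k<n. Lv x a k * 3 ^ k) = trunc3 b n] (mod 3 ^ n)"
      using S_Lv[of x n a] by (meson cong_sym cong_trans)
    then show ?thesis unfolding e cong_iff_dvd_diff .
  qed
  then show ?thesis unfolding solves3_def by blast
qed

abbreviation Ck :: "(nat \<Rightarrow> int) \<Rightarrow> (nat \<Rightarrow> int) \<Rightarrow> (nat \<Rightarrow> int) \<Rightarrow> nat \<Rightarrow> bool" where
  "Ck x a b k \<equiv> [lev x a k + Mcarry x a b (k - 1) = b k] (mod 3)"

lemma carry:
  assumes C1: "[x 0 ^ 3 = b 0 + 3 * b 1] (mod 9)"
    and C: "\<forall>j. 2 \<le> j \<and> j < Suc (Suc m) \<longrightarrow> Ck x a b j"
  shows "Dd x a b (Suc (Suc m)) = 3 ^ Suc (Suc m) * Mcarry x a b (Suc m)"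
  using C
proof (induction m)
  case 0
  have "Dd x a b 2 = x 0 ^ 3 - b 0 - 3 * b 1"
    by (simp add: Dd_def Lv_def numeral_2_eq_2)
  moreover have "9 dvd x 0 ^ 3 - b 0 - 3 * b 1" using C1 unfolding cong_iff_dvd_diff by (simp add: algebra_simps)
  ultimately show ?case by (simp add: numeral_2_eq_2)
next
  case (Suc m)
  have IH: "Dd x a b (Suc (Suc m)) = 3 ^ Suc (Suc m) * Mcarry x a b (Suc m)"
    using Suc.IH Suc.prems by auto
  have "Ck x a b (Suc (Suc m))" using Suc.prems[rule_format, of "Suc (Suc m)"] by simp
  then have d: "3 dvd lev x a (Suc (Suc m)) + Mcarry x a b (Suc m) - b (Suc (Suc m))"
    unfolding cong_iff_dvd_diff by simp
  obtain y where y: "lev x a (Suc (Suc m)) + Mcarry x a b (Suc m) - b (Suc (Suc m)) = 3 * y"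
    using d by (auto elim: dvdE)
  have My: "Mcarry x a b (Suc (Suc m)) = y" using y by simp
  have "Dd x a b (Suc (Suc (Suc m))) = 3 ^ Suc (Suc m) * (lev x a (Suc (Suc m)) + Mcarry x a b (Suc m) - b (Suc (Suc m)))"
    unfolding Dd_Suc[of x a b "Suc (Suc m)"] IH by (simp add: Lv_def algebra_simps)
  also have "\<dots> = 3 ^ Suc (Suc (Suc m)) * Mcarry x a b (Suc (Suc m))"
    unfolding y My by simp
  finally show ?case .
qed


lemma Dd1: "Dd x a b 1 = x 0 ^ 3 - b 0" by (simp add: Dd_def Lv_def)
lemma Dd2: "Dd x a b 2 = x 0 ^ 3 - b 0 - 3 * b 1" by (simp add: Dd_def Lv_def numeral_2_eq_2)

lemma main_iff:
  "solves3 x a b \<longleftrightarrow>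
    ([x 0 ^ 3 = b 0] (mod 3) \<and> [x 0 ^ 3 = b 0 + 3 * b 1] (mod 9) \<and> (\<forall>k\<ge>2. Ck x a b k))"
proof
  assume "solves3 x a b"
  then have D: "\<And>n. (3::int) ^ n dvd Dd x a b n" using solves_Dd by blast
  have C0: "[x 0 ^ 3 = b 0] (mod 3)" using D[of 1] unfolding Dd1 cong_iff_dvd_diff by simp
  have C1: "[x 0 ^ 3 = b 0 + 3 * b 1] (mod 9)" using D[of 2] unfolding Dd2 cong_iff_dvd_diff
    by (simp add: algebra_simps)
  have "2 \<le> k \<longrightarrow> Ck x a b k" for k
  proof (induction k rule: less_induct)
    case (less k)
    show ?case
    proof
      assume k2: "2 \<le> k"
      then obtain m where m: "k = Suc (Suc m)" by (metis add_2_eq_Suc le_Suc_ex)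
      have "\<forall>j. 2 \<le> j \<and> j < Suc (Suc m) \<longrightarrow> Ck x a b j" using less.IH m by auto
      then have "Dd x a b k = 3 ^ k * Mcarry x a b (k - 1)"
        using carry[of x b m a] C1 m by auto
      then have "Dd x a b (Suc k) = 3 ^ k * (lev x a k + Mcarry x a b (k - 1) - b k)"
        unfolding Dd_Suc using k2 by (simp add: Lv_def algebra_simps)
      moreover have "3 ^ k * 3 dvd Dd x a b (Suc k)" using D[of "Suc k"] by (simp add: mult.commute)
      ultimately have "3 dvd lev x a k + Mcarry x a b (k - 1) - b k"
        by (simp add: dvd_mult_cancel_left)
      then show "Ck x a b k" unfolding cong_iff_dvd_diff by simp
    qed
  qed
  then show "[x 0 ^ 3 = b 0] (mod 3) \<and> [x 0 ^ 3 = b 0 + 3 * b 1] (mod 9) \<and> (\<forall>k\<ge>2. Ck x a b k)"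
    using C0 C1 by blast
next
  assume H: "[x 0 ^ 3 = b 0] (mod 3) \<and> [x 0 ^ 3 = b 0 + 3 * b 1] (mod 9) \<and> (\<forall>k\<ge>2. Ck x a b k)"
  have "(3::int) ^ n dvd Dd x a b n" for n
  proof -
    consider "n = 0" | "n = 1" | m where "n = Suc (Suc m)"
      by (metis One_nat_def not0_implies_Suc)
    then show ?thesis
    proof cases
      case 1 then show ?thesis by simp
    next
      case 2 then show ?thesis using H Dd1[of x a b] unfolding cong_iff_dvd_diff by simp
    next
      case 3
      have "Dd x a b n = 3 ^ n * Mcarry x a b (Suc m)"
        using carry[of x b m a] H 3 by auto
      then show ?thesis by simp
    qed
  qed
  then show "solves3 x a b" using solves_Dd by blast
qed

theorem theorem3p5:
  fixes a b x :: "nat \<Rightarrow> int"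
  assumes "digits3 a" and "a 0 \<noteq> 0"
    and "digits3 b" and "b 0 \<noteq> 0"
    and "(b 0, b 1) = (1, 0) \<or> (b 0, b 1) = (2, 2)"
    and "digits3 x" and "x 0 \<noteq> 0"
  shows "solves3 x a b \<longleftrightarrow>
    ([x 0 ^ 3 = b 0] (mod 3) \<and>
     [x 0 ^ 3 = b 0 + 3 * b 1] (mod 9) \<and>
     [x 0 ^ 2 * x 1 + Mcarry x a b 1 = b 2] (mod 3) \<and>
     [x 0 ^ 2 * x 2 + Pkj 3 2 x + x 0 * a 0 + x 0 * x 1 ^ 2 + Mcarry x a b 2 = b 3] (mod 3) \<and>
     (\<forall>k\<ge>4. [x 0 ^ 2 * x (k - 1) + Pkj k (k - 1) x + 2 * x 0 * x 1 * x (k - 2)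
               + (\<Sum>i\<le>k - 3. x (k - 3 - i) * a i) + Mcarry x a b (k - 1) = b k] (mod 3)))"
proof -
  have e2: "Ck x a b 2 \<longleftrightarrow> [x 0 ^ 2 * x 1 + Mcarry x a b 1 = b 2] (mod 3)"
    by (simp add: lev_def)
  have e3: "Ck x a b 3 \<longleftrightarrow>
     [x 0 ^ 2 * x 2 + Pkj 3 2 x + x 0 * a 0 + x 0 * x 1 ^ 2 + Mcarry x a b 2 = b 3] (mod 3)"
    by (simp add: lev_def)
  have e4: "Ck x a b k \<longleftrightarrow> [x 0 ^ 2 * x (k - 1) + Pkj k (k - 1) x + 2 * x 0 * x 1 * x (k - 2)
               + (\<Sum>i\<le>k - 3. x (k - 3 - i) * a i) + Mcarry x a b (k - 1) = b k] (mod 3)"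
    if "k \<ge> 4" for k using that by (simp add: lev_def)
  have split: "(\<forall>k\<ge>2. Ck x a b k) \<longleftrightarrow> Ck x a b 2 \<and> Ck x a b 3 \<and> (\<forall>k\<ge>4. Ck x a b k)"
  proof
    assume h: "\<forall>k\<ge>2. Ck x a b k"
    have "Ck x a b 2" by (rule h[rule_format]) simp
    moreover have "Ck x a b 3" by (rule h[rule_format]) simp
    moreover have "\<forall>k\<ge>4. Ck x a b k" using h by auto
    ultimately show "Ck x a b 2 \<and> Ck x a b 3 \<and> (\<forall>k\<ge>4. Ck x a b k)" by blast
  next
    assume h: "Ck x a b 2 \<and> Ck x a b 3 \<and> (\<forall>k\<ge>4. Ck x a b k)"
    show "\<forall>k\<ge>2. Ck x a b k"
    proof (intro allI impI)
      fix k :: nat assume "2 \<le> k"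
      then consider "k = 2" | "k = 3" | "k \<ge> 4" by linarith
      then show "Ck x a b k" using h by cases auto
    qed
  qed
  show ?thesis unfolding main_iff split e2 e3 using e4 by auto
qed

end
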